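(* Let $d\ge 1$, $N\ge 1$, $L\ge 0$ be integers and let $\epsilon>0$, $\alpha>0$, $\sigma>0$, $c\ge 0$ be real numbers. Fix a state $s$ and let $R(s,\cdot):\mathbb{R}^d\to\mathbb{R}$ be differentiable and $c$-Lipschitz with respect to the Euclidean norm, so that $\|\nabla_a R(s,a)\|_2\le c$ for all $a\in\mathbb{R}^d$. Let $k(x,y)=\exp\!\big(-\|x-y\|_2^2/(2\sigma^2)\big)$ be the Gaussian (RBF) kernel on $\mathbb{R}^d$. Let $a_1^{(0)},\dots,a_N^{(0)}\in\mathbb{R}^d$ be arbitrary initial particles (e.g. samples from a reference policy $\mu(\cdot\mid s)$), and define iteratively, for $l=0,1,\dots,L-1$ and $i=1,\dots,N$, $$a_i^{(l+1)} = a_i^{(l)} + \epsilon\,\phi_l\big(a_i^{(l)}\big),\qquad \phi_l(x)=\frac1N\sum_{j=1}^N\Big[k\big(a_j^{(l)},x\big)\,\frac{\nabla_a R\big(s,a_j^{(l)}\big)}{\alpha}+\nabla_{a_j}k\big(a_j^{(l)},x\big)\Big],$$ where $\nabla_{a_j}k(a_j,x)$ denotes the gradient of $k$ with respect to its first argument evaluated at $a_j=a_j^{(l)}$. Let $\pi_N^0=\frac1N\sum_{i=1}^N\delta_{a_i^{(0)}}$ and $\pi_N^L=\frac1N\sum_{i=1}^N\delta_{a_i^{(L)}}$. Then $$\mathrm{MMD}^2\big(\pi_N^0,\pi_N^L\big)\le \frac{2\epsilon L}{\sigma\sqrt e}\left(\frac{c}{\alpha}+\frac{1}{\sigma\sqrt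 e}\right).$$
   Context: For probability measures $P,Q$ on $\mathbb{R}^d$, the squared maximum mean discrepancy with kernel $k$ is $\mathrm{MMD}^2(P,Q)=\mathbb{E}_{x,x'\sim P}k(x,x')+\mathbb{E}_{y,y'\sim Q}k(y,y')-2\,\mathbb{E}_{x\sim P,y\sim Q}k(x,y)$ (with independent draws). For the empirical measures above this equals $\frac{1}{N^2}\sum_{i,j=1}^N\big[k(a_i^{(0)},a_j^{(0)})+k(a_i^{(L)},a_j^{(L)})-2k(a_i^{(0)},a_j^{(L)})\big]$. The kernel bandwidth $\sigma$ is a fixed constant (the same in every iteration). In the paper, $\pi_N^0$ is identified with the reference distribution $\mu$, and $\pi_N^L$ is the "implicit policy" obtained by running $L$ steps of the particle update (Value Gradient Flow). *)

theory Defs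
  imports "HOL-Analysis.Analysis"
begin

definition rbf :: "real \<Rightarrow> 'a::real_normed_vector \<Rightarrow> 'a \<Rightarrow> real" where
  "rbf \<sigma> x y = exp (- (norm (x - y))\<^sup>2 / (2 * \<sigma>\<^sup>2))"

text \<open>Gradient of the RBF kernel with respect to its first argument y, evaluated at (y, x):
  grad_y exp(-|y-x|^2/(2 sigma^2)) = -(y - x)/sigma^2 * k(y,x).\<close>
definition rbf_grad1 :: "real \<Rightarrow> 'a::real_normed_vector \<Rightarrow> 'a \<Rightarrow> 'a" where
  "rbf_grad1 \<sigma> y x = (- rbf \<sigma> y x / \<sigma>\<^sup>2) *\<^sub>R (y - x)"

definition vgf_phi :: "nat \<Rightarrow> real \<Rightarrow> real \<Rightarrow> ('a::real_normed_vector \<Rightarrow> 'a) \<Rightarrow> (nat \<Rightarrow> 'a) \<Rightarrow> 'a \<Rightarrow> 'a" where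
  "vgf_phi N \<sigma> \<alpha> G p x =
     (1 / real N) *\<^sub>R (\<Sum>j<N. (rbf \<sigma> (p j) x / \<alpha>) *\<^sub>R G (p j) + rbf_grad1 \<sigma> (p j) x)"

fun vgf_particles :: "nat \<Rightarrow> real \<Rightarrow> real \<Rightarrow> real \<Rightarrow> ('a::real_normed_vector \<Rightarrow> 'a) \<Rightarrow> (nat \<Rightarrow> 'a) \<Rightarrow> nat \<Rightarrow> nat \<Rightarrow> 'a" where
  "vgf_particles N \<epsilon> \<sigma> \<alpha> G a0 0 = a0"
| "vgf_particles N \<epsilon> \<sigma> \<alpha> G a0 (Suc l) =
     (\<lambda>i. vgf_particles N \<epsilon> \<sigma> \<alpha> G a0 l i
          + \<epsilon> *\<^sub>R vgf_phi N \<sigma> \<alpha> G (vgf_particles N \<epsilon> \<sigma> \<alpha> G a0 l) (vgf_particles N \<epsilon> \<sigma> \<alpha> G a0 l i))"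

definition mmd2_emp :: "real \<Rightarrow> nat \<Rightarrow> (nat \<Rightarrow> 'a::real_normed_vector) \<Rightarrow> (nat \<Rightarrow> 'a) \<Rightarrow> real" where
  "mmd2_emp \<sigma> N x y = (1 / (real N)\<^sup>2) *
     (\<Sum>i<N. \<Sum>j<N. rbf \<sigma> (x i) (x j) + rbf \<sigma> (y i) (y j) - 2 * rbf \<sigma> (x i) (y j))"

end

theory Submission imports Defs begin
lemma gbound:
  fixes R :: "real ^ 'd \<Rightarrow> real" and G :: "real ^ 'd \<Rightarrow> real ^ 'd"
  assumes d: "(R has_derivative (\<lambda>h. G a \<bullet> h)) (at a)"
    and l: "c-lipschitz_on UNIV R"
  shows "norm (G a) \<le> c"
proof -
  define v where "v = G a"
  define f where "f t = R (a + t *\<^sub>R v)" for t :: real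
  have "((\<lambda>t. a + t *\<^sub>R v) has_derivative (\<lambda>t. t *\<^sub>R v)) (at 0)"
    by (auto intro!: derivative_eq_intros)
  moreover have d': "(R has_derivative (\<lambda>h. G a \<bullet> h)) (at (a + 0 *\<^sub>R v))" using d by simp
  ultimately have "(f has_derivative (\<lambda>t. G a \<bullet> (t *\<^sub>R v))) (at 0)"
    unfolding f_def by (rule has_derivative_compose)
  then have "(f has_field_derivative (v \<bullet> v)) (at 0)"
    unfolding has_field_derivative_def v_def by (simp add: mult.commute[of _ "G a \<bullet> G a"])
  then have lim: "((\<lambda>t. (f t - f 0) / (t - 0)) \<longlongrightarrow> v \<bullet> v) (at 0)"
    using DERIV_def by (simp add: has_field_derivative_iff)
  have "\<forall>\<^sub>F t in at (0::real). (f t - f 0) / (t - 0) \<le> c * norm v"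
  proof (rule eventuallyI)
    fix t :: real
    have "\<bar>f t - f 0\<bar> \<le> c * dist (a + t *\<^sub>R v) a"
      unfolding f_def using lipschitz_onD[OF l, of "a + t *\<^sub>R v" a] by (simp add: dist_real_def)
    also have "\<dots> = c * (\<bar>t\<bar> * norm v)" by (simp add: dist_norm)
    finally have "\<bar>f t - f 0\<bar> \<le> \<bar>t\<bar> * (c * norm v)" by (simp add: algebra_simps)
    then show "(f t - f 0) / (t - 0) \<le> c * norm v"
    proof (cases "t = 0")
      case True then show ?thesis using lipschitz_on_nonneg[OF l] by simp
    next
      case False
      have "(f t - f 0) / (t - 0) \<le> \<bar>f t - f 0\<bar> / \<bar>t\<bar>"
        by (metis abs_ge_self abs_divide diff_zero)
      also have "\<dots> \<le> c * norm v" using False \<open>\<bar>f t - f 0\<bar> \<le> \<bar>t\<bar> * (c * norm v)\<close>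
        by (simp add: pos_divide_le_eq mult_ac)
      finally show ?thesis .
    qed
  qed
  then have "v \<bullet> v \<le> c * norm v"
    by (rule tendsto_upperbound[OF lim]) simp
  then have "norm v * norm v \<le> c * norm v" by (simp add: dot_square_norm power2_eq_square)
  show ?thesis
  proof (cases "norm v = 0")
    case True then show ?thesis using lipschitz_on_nonneg[OF l] unfolding v_def by simp
  next
    case False then have "norm v > 0" by simp
    then show ?thesis using \<open>norm v * norm v \<le> c * norm v\<close> unfolding v_def
      using mult_le_cancel_right_pos by blast
  qed
qed
lemma exp_half: "exp (-1/2) = 1 / sqrt (exp 1)"
proof -
  have "sqrt (exp 1) = exp (1/2)"
    by (rule real_sqrt_unique) (simp_all add: power2_eq_square exp_add[symmetric])
  then show ?thesis by (simp add: exp_minus inverse_eq_divide)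
qed

lemma tbound: "\<bar>t::real\<bar> * exp (- t\<^sup>2 / 2) \<le> exp (-1/2)"
proof -
  have "\<bar>t\<bar> \<le> 1 + (t\<^sup>2 - 1) / 2"
  proof -
    have "0 \<le> (\<bar>t\<bar> - 1)\<^sup>2" by simp
    also have "(\<bar>t\<bar> - 1)\<^sup>2 = t\<^sup>2 - 2 * \<bar>t\<bar> + 1"
      by (simp add: power2_eq_square algebra_simps)
    finally show ?thesis by (simp add: field_simps)
  qed
  also have "\<dots> \<le> exp ((t\<^sup>2 - 1) / 2)" by (rule exp_ge_add_one_self)
  finally have "\<bar>t\<bar> * exp (- t\<^sup>2 / 2) \<le> exp ((t\<^sup>2 - 1) / 2) * exp (- t\<^sup>2 / 2)"
    by (simp add: mult_right_mono)
  also have "\<dots> = exp (-1/2)" by (simp add: exp_add[symmetric] diff_divide_distrib)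
  finally show ?thesis .
qed

lemma gder_bound:
  assumes "\<sigma> > 0"
  shows "\<bar>r::real\<bar> / \<sigma>\<^sup>2 * exp (- r\<^sup>2 / (2 * \<sigma>\<^sup>2)) \<le> 1 / (\<sigma> * sqrt (exp 1))"
proof -
  define t where "t = r / \<sigma>"
  have r: "r = t * \<sigma>" using assms by (simp add: t_def)
  have "\<bar>r\<bar> / \<sigma>\<^sup>2 * exp (- r\<^sup>2 / (2 * \<sigma>\<^sup>2)) = (\<bar>t\<bar> * exp (- t\<^sup>2 / 2)) / \<sigma>"
    using assms unfolding r by (simp add: power2_eq_square abs_mult field_simps)
  also have "\<dots> \<le> exp (-1/2) / \<sigma>"
    using tbound[of t] assms by (simp add: divide_right_mono)
  also have "\<dots> = 1 / (\<sigma> * sqrt (exp 1))" using exp_half by simp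
  finally show ?thesis .
qed

lemma glip:
  assumes "\<sigma> > 0"
  shows "\<bar>exp (- r\<^sup>2 / (2 * \<sigma>\<^sup>2)) - exp (- s\<^sup>2 / (2 * \<sigma>\<^sup>2))\<bar> \<le> \<bar>r - s\<bar> * (1 / (\<sigma> * sqrt (exp 1)))"
proof -
  define g where "g r = exp (- r\<^sup>2 / (2 * \<sigma>\<^sup>2))" for r :: real
  define K where "K = 1 / (\<sigma> * sqrt (exp 1))"
  have der: "DERIV g x :> (- (x / \<sigma>\<^sup>2) * g x)" for x
    unfolding g_def using assms
    by (auto intro!: derivative_eq_intros simp: field_simps power2_eq_square)
  have "\<bar>g a - g b\<bar> \<le> \<bar>a - b\<bar> * K" if ab: "a < b" for a b
  proof -
    obtain z where z: "g b - g a = (b - a) * (- (z / \<sigma>\<^sup>2) * g z)"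
      using MVT2[OF ab, of g "\<lambda>x. - (x / \<sigma>\<^sup>2) * g x"] der by blast
    have "\<bar>- (z / \<sigma>\<^sup>2) * g z\<bar> = \<bar>z\<bar> / \<sigma>\<^sup>2 * g z"
      by (simp add: g_def abs_mult)
    also have "\<dots> \<le> K" unfolding K_def g_def by (rule gder_bound[OF assms])
    finally have "\<bar>g b - g a\<bar> \<le> \<bar>b - a\<bar> * K"
      unfolding z abs_mult[of "b - a"] by (rule mult_left_mono) simp_all
    then show ?thesis by (simp add: abs_minus_commute)
  qed
  then have "\<bar>g r - g s\<bar> \<le> \<bar>r - s\<bar> * K"
  proof (cases r s rule: linorder_cases)
    case greater
    then have "\<bar>g s - g r\<bar> \<le> \<bar>s - r\<bar> * K" using \<open>\<And>a b. a < b \<Longrightarrow> _\<close> by blast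
    then show ?thesis by (simp add: abs_minus_commute)
  next
    case less
    then show ?thesis using \<open>\<And>a b. a < b \<Longrightarrow> _\<close> by blast
  next
    case equal
    then show ?thesis by simp
  qed
  then show ?thesis by (simp add: g_def K_def)
qed

lemma rbf_sym: "rbf \<sigma> x y = rbf \<sigma> y x"
  unfolding rbf_def by (simp add: norm_minus_commute)

lemma rbf_lip:
  assumes "\<sigma> > 0"
  shows "\<bar>rbf \<sigma> a x - rbf \<sigma> a y\<bar> \<le> norm (x - y) * (1 / (\<sigma> * sqrt (exp 1)))"
proof -
  have "\<bar>rbf \<sigma> a x - rbf \<sigma> a y\<bar> \<le> \<bar>norm (a - x) - norm (a - y)\<bar> * (1 / (\<sigma> * sqrt (exp 1)))"
    unfolding rbf_def by (rule glip[OF assms])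
  also have "\<dots> \<le> norm (x - y) * (1 / (\<sigma> * sqrt (exp 1)))"
    using norm_triangle_ineq3[of "a - x" "a - y"] assms
    by (intro mult_right_mono) (simp_all add: norm_minus_commute)
  finally show ?thesis .
qed

lemma rbf_le1: "rbf \<sigma> x y \<le> 1" and rbf_nonneg: "rbf \<sigma> x y \<ge> 0"
  unfolding rbf_def by auto

lemma grad_bound:
  assumes "\<sigma> > 0"
  shows "norm (rbf_grad1 \<sigma> y x) \<le> 1 / (\<sigma> * sqrt (exp 1))"
proof -
  have "norm (rbf_grad1 \<sigma> y x) = \<bar>norm (y - x)\<bar> / \<sigma>\<^sup>2 * exp (- (norm (y - x))\<^sup>2 / (2 * \<sigma>\<^sup>2))"
    unfolding rbf_grad1_def rbf_def by (simp add: abs_mult)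
  also have "\<dots> \<le> 1 / (\<sigma> * sqrt (exp 1))" by (rule gder_bound[OF assms])
  finally show ?thesis .
qed

lemma phi_bound:
  fixes G :: "'a::real_normed_vector \<Rightarrow> 'a"
  assumes N: "N \<ge> 1" and al: "\<alpha> > 0" and sg: "\<sigma> > 0" and Gb: "\<And>z. norm (G z) \<le> c"
  shows "norm (vgf_phi N \<sigma> \<alpha> G p x) \<le> c / \<alpha> + 1 / (\<sigma> * sqrt (exp 1))"
proof -
  define B where "B = c / \<alpha> + 1 / (\<sigma> * sqrt (exp 1))"
  have tm: "norm ((rbf \<sigma> (p j) x / \<alpha>) *\<^sub>R G (p j) + rbf_grad1 \<sigma> (p j) x) \<le> B" for j
  proof -
    have c0: "c \<ge> 0" using Gb[of 0] norm_ge_zero order_trans by blast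
    have "norm ((rbf \<sigma> (p j) x / \<alpha>) *\<^sub>R G (p j)) = rbf \<sigma> (p j) x / \<alpha> * norm (G (p j))"
      using rbf_nonneg[of \<sigma> "p j" x] al by simp
    also have "\<dots> \<le> 1 / \<alpha> * c"
      using rbf_nonneg[of \<sigma> "p j" x] rbf_le1[of \<sigma> "p j" x] al Gb[of "p j"] c0
      by (intro mult_mono divide_right_mono) auto
    finally have "norm ((rbf \<sigma> (p j) x / \<alpha>) *\<^sub>R G (p j)) \<le> c / \<alpha>" by simp
    then show ?thesis unfolding B_def
      using norm_triangle_ineq[of "(rbf \<sigma> (p j) x / \<alpha>) *\<^sub>R G (p j)" "rbf_grad1 \<sigma> (p j) x"]
        grad_bound[OF sg, of "p j" x] by linarith
  qed
  have "norm (vgf_phi N \<sigma> \<alpha> G p x) = (1 / real N) * norm (\<Sum>j<N. (rbf \<sigma> (p j) x / \<alpha>) *\<^sub>R G (p j) + rbf_grad1 \<sigma> (p j) x)"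
    unfolding vgf_phi_def by simp
  also have "\<dots> \<le> (1 / real N) * (\<Sum>j<N. norm ((rbf \<sigma> (p j) x / \<alpha>) *\<^sub>R G (p j) + rbf_grad1 \<sigma> (p j) x))"
    by (intro mult_left_mono norm_sum) simp
  also have "\<dots> \<le> (1 / real N) * (\<Sum>j<N. B)"
    by (intro mult_left_mono sum_mono tm) simp
  also have "\<dots> = B" using N by simp
  finally show ?thesis unfolding B_def .
qed

lemma disp_bound:
  fixes G :: "'a::real_normed_vector \<Rightarrow> 'a"
  assumes N: "N \<ge> 1" and al: "\<alpha> > 0" and sg: "\<sigma> > 0" and ep: "\<epsilon> > 0" and Gb: "\<And>z. norm (G z) \<le> c"
  shows "norm (vgf_particles N \<epsilon> \<sigma> \<alpha> G q L i - q i) \<le> real L * (\<epsilon> * (c / \<alpha> + 1 / (\<sigma> * sqrt (exp 1))))"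
proof (induction L)
  case 0 then show ?case by simp
next
  case (Suc L)
  define P where "P = vgf_particles N \<epsilon> \<sigma> \<alpha> G q L"
  define E where "E = \<epsilon> * (c / \<alpha> + 1 / (\<sigma> * sqrt (exp 1)))"
  have st: "norm (\<epsilon> *\<^sub>R vgf_phi N \<sigma> \<alpha> G P (P i)) \<le> \<epsilon> * (c / \<alpha> + 1 / (\<sigma> * sqrt (exp 1)))"
    using phi_bound[OF N al sg Gb, where p=P and x="P i"] ep by (simp add: mult_left_mono)
  have "norm (vgf_particles N \<epsilon> \<sigma> \<alpha> G q (Suc L) i - q i)
        = norm ((P i - q i) + \<epsilon> *\<^sub>R vgf_phi N \<sigma> \<alpha> G P (P i))"
    by (simp add: P_def algebra_simps)
  also have "\<dots> \<le> norm (P i - q i) + norm (\<epsilon> *\<^sub>R vgf_phi N \<sigma> \<alpha> G P (P i))"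
    by (rule norm_triangle_ineq)
  also have "\<dots> \<le> real (Suc L) * (\<epsilon> * (c / \<alpha> + 1 / (\<sigma> * sqrt (exp 1))))"
  proof -
    have "real (Suc L) * E = real L * E + E" by (simp add: algebra_simps)
    then show ?thesis using Suc.IH st unfolding P_def E_def[symmetric] by linarith
  qed
  finally show ?case .
qed

theorem theorem1:
  fixes R :: "real ^ 'd \<Rightarrow> real" and G :: "real ^ 'd \<Rightarrow> real ^ 'd"
    and a0 :: "nat \<Rightarrow> real ^ 'd"
    and N L :: nat and \<epsilon> \<alpha> \<sigma> c :: real
  assumes "N \<ge> 1" and "\<epsilon> > 0" and "\<alpha> > 0" and "\<sigma> > 0" and "c \<ge> 0"
    and "\<And>a. (R has_derivative (\<lambda>h. G a \<bullet> h)) (at a)"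
    and "c-lipschitz_on UNIV R"
  shows "mmd2_emp \<sigma> N a0 (vgf_particles N \<epsilon> \<sigma> \<alpha> G a0 L)
         \<le> 2 * \<epsilon> * real L / (\<sigma> * sqrt (exp 1)) * (c / \<alpha> + 1 / (\<sigma> * sqrt (exp 1)))"
proof -
  note N = assms(1) and ep = assms(2) and al = assms(3) and sg = assms(4)
  have Gb: "\<And>z. norm (G z) \<le> c" using gbound[OF assms(6) assms(7)] .
  define K where "K = 1 / (\<sigma> * sqrt (exp 1))"
  define D where "D = real L * (\<epsilon> * (c / \<alpha> + K))"
  define x where "x = a0"
  define y where "y = vgf_particles N \<epsilon> \<sigma> \<alpha> G a0 L"
  have K0: "K \<ge> 0" using sg by (simp add: K_def)
  have dj: "norm (x j - y j) \<le> D" for j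
    using disp_bound[OF N al sg ep Gb, where q=a0 and L=L and i=j] unfolding x_def y_def D_def K_def
    by (simp add: norm_minus_commute)
  have swap: "(\<Sum>i<N. \<Sum>j<N. rbf \<sigma> (x i) (y j)) = (\<Sum>i<N. \<Sum>j<N. rbf \<sigma> (y i) (x j))"
    by (subst sum.swap) (simp add: rbf_sym)
  have "(\<Sum>i<N. \<Sum>j<N. rbf \<sigma> (x i) (x j) + rbf \<sigma> (y i) (y j) - 2 * rbf \<sigma> (x i) (y j))
      = (\<Sum>i<N. \<Sum>j<N. rbf \<sigma> (x i) (x j) + rbf \<sigma> (y i) (y j)) - 2 * (\<Sum>i<N. \<Sum>j<N. rbf \<sigma> (x i) (y j))"
    by (simp add: sum_subtractf sum_distrib_left)
  also have "\<dots> = (\<Sum>i<N. \<Sum>j<N. (rbf \<sigma> (x i) (x j) - rbf \<sigma> (x i) (y j)) + (rbf \<sigma> (y i) (y j) - rbf \<sigma> (y i) (x j)))"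
    using swap by (simp add: sum_subtractf sum.distrib)
  also have "\<dots> \<le> (\<Sum>i<N. \<Sum>j<N. 2 * (D * K))"
  proof (intro sum_mono)
    fix i j
    have "rbf \<sigma> (x i) (x j) - rbf \<sigma> (x i) (y j) \<le> norm (x j - y j) * K"
      using rbf_lip[OF sg, of "x i" "x j" "y j"] unfolding K_def by linarith
    also have "\<dots> \<le> D * K" using dj[of j] K0 by (rule mult_right_mono)
    finally have 1: "rbf \<sigma> (x i) (x j) - rbf \<sigma> (x i) (y j) \<le> D * K" .
    have "rbf \<sigma> (y i) (y j) - rbf \<sigma> (y i) (x j) \<le> norm (y j - x j) * K"
      using rbf_lip[OF sg, of "y i" "y j" "x j"] unfolding K_def by linarith
    also have "\<dots> \<le> D * K" using dj[of j] K0 by (simp add: norm_minus_commute mult_right_mono)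
    finally have 2: "rbf \<sigma> (y i) (y j) - rbf \<sigma> (y i) (x j) \<le> D * K" .
    show "(rbf \<sigma> (x i) (x j) - rbf \<sigma> (x i) (y j)) + (rbf \<sigma> (y i) (y j) - rbf \<sigma> (y i) (x j)) \<le> 2 * (D * K)"
      using 1 2 by linarith
  qed
  also have "\<dots> = (real N)\<^sup>2 * (2 * (D * K))" by (simp add: power2_eq_square)
  finally have S: "(\<Sum>i<N. \<Sum>j<N. rbf \<sigma> (x i) (x j) + rbf \<sigma> (y i) (y j) - 2 * rbf \<sigma> (x i) (y j))
      \<le> (real N)\<^sup>2 * (2 * (D * K))" .
  have "mmd2_emp \<sigma> N x y \<le> 1 / (real N)\<^sup>2 * ((real N)\<^sup>2 * (2 * (D * K)))"
    unfolding mmd2_emp_def by (rule mult_left_mono[OF S]) simp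
  also have "\<dots> = 2 * (D * K)" using N by simp
  also have "\<dots> = 2 * \<epsilon> * real L / (\<sigma> * sqrt (exp 1)) * (c / \<alpha> + 1 / (\<sigma> * sqrt (exp 1)))"
    unfolding D_def K_def by (simp add: field_simps)
  finally show ?thesis unfolding x_def y_def .
qed

end
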